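(* Let $p$ be an odd prime, $\ell$ an integer not divisible by $p$, $a$ the remainder of $\ell$ mod $p$, $\nu_i=\lfloor\frac{a+i\ell}{p}\rfloor$ and $n_i=\min_{0\le j\le p-1-i}(\nu_{i+j}-\nu_j)$ for $0\le i\le p-1$. Fix $0\le k,i\le p-1$ with $k+i\le p-1$ and put $h=p-i$, and for $0\le j\le p-1$ let $\mu^{(k)}_{j,i}=\delta_{j,k+i}\,\pi_K^{\nu_j-\nu_k-n_i}$ (these lie in $\mathcal{O}_K$), with $\overline{\mu}^{(k)}_{j,i}$ its reduction modulo $\mathfrak{p}_K$. Then: (1) if $j\ne k+i$, $\overline{\mu}^{(k)}_{j,i}=0$; (2) if $h\notin E$, then $\overline{\mu}^{(k)}_{k+i,i}=1$ if $h=p$ or $\operatorname{frac}((k+1)a/p)<\operatorname{frac}(ha/p)$, and $\overline{\mu}^{(k)}_{k+i,i}=0$ otherwise; (3) if $h\in E$, then $\overline{\mu}^{(k)}_{k+i,i}=1$.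
   Context: $K$ is a $p$-adic field with uniformizer $\pi_K$ and maximal ideal $\mathfrak{p}_K$. For a real $x$, $\operatorname{frac}(x)=x-\lfloor x\rfloor$. $E=\{h\in\mathbb{Z}: 1\le h<p,\ \text{and for all integers } 1\le h'<h,\ \operatorname{frac}(h'a/p)>\operatorname{frac}(ha/p)\}$. (Interpretation: in the typical setting with $H=K[w]$, $\mu^{(k)}_{j,i}$ is the coefficient of $\pi_K^{-\nu_j}w^j$ in $\pi_K^{-\nu_k}w^k\cdot\pi_K^{-n_i}w^i$, i.e. the $(j,i)$ entry of the matrix of multiplication by $\pi_K^{-\nu_k}w^k$ from the basis $\{\pi_K^{-n_i}w^i\}$ of $\mathfrak{A}_{L/K}$ to the basis $\{\pi_K^{-\nu_j}w^j\}$ of $\mathfrak{A}_\theta$.) *)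

theory Defs
  imports Complex_Main "HOL-Computational_Algebra.Primes"
begin

text \<open>Discrete valuation on a field (value at 0 is irrelevant and ignored).\<close>
definition discrete_valuation :: "('a::field \<Rightarrow> int) \<Rightarrow> bool" where
  "discrete_valuation v \<longleftrightarrow>
     (\<forall>x y. x \<noteq> 0 \<and> y \<noteq> 0 \<longrightarrow> v (x * y) = v x + v y) \<and>
     (\<forall>x y. x \<noteq> 0 \<and> y \<noteq> 0 \<and> x + y \<noteq> 0 \<longrightarrow> v (x + y) \<ge> min (v x) (v y))"

definition valring :: "('a::field \<Rightarrow> int) \<Rightarrow> 'a set" where
  "valring v = {x. x = 0 \<or> v x \<ge> 0}"

definition maxideal :: "('a::field \<Rightarrow> int) \<Rightarrow> 'a set" where
  "maxideal v = {x. x = 0 \<or> v x > 0}"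

definition resid :: "('a::field \<Rightarrow> int) \<Rightarrow> 'a \<Rightarrow> 'a set" where
  "resid v x = {y \<in> valring v. x - y \<in> maxideal v}"

definition nu :: "nat \<Rightarrow> int \<Rightarrow> nat \<Rightarrow> int" where
  "nu p l i = \<lfloor>(real_of_int (l mod int p) + real i * real_of_int l) / real p\<rfloor>"

definition nmin :: "nat \<Rightarrow> int \<Rightarrow> nat \<Rightarrow> int" where
  "nmin p l i = Min ((\<lambda>j. nu p l (i + j) - nu p l j) ` {0..p - 1 - i})"

definition Eset :: "nat \<Rightarrow> int \<Rightarrow> nat set" where
  "Eset p a = {h. 1 \<le> h \<and> h < p \<and>
      (\<forall>h'. 1 \<le> h' \<and> h' < h \<longrightarrow>
         frac (real h' * real_of_int a / real p) > frac (real h * real_of_int a / real p))}"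

definition mu :: "'a::field \<Rightarrow> nat \<Rightarrow> int \<Rightarrow> nat \<Rightarrow> nat \<Rightarrow> nat \<Rightarrow> 'a" where
  "mu \<pi> p l k j i = (if j = k + i then \<pi> powi (nu p l j - nu p l k - nmin p l i) else 0)"

end

theory Submission
  imports Defs
begin

lemma nu_mul:
  assumes "p > 0"
  shows "int p * nu p l j = (int j + 1) * l - ((int j + 1) * l) mod int p - int p * (l div int p)"
proof -
  have "nu p l j = (l mod int p + int j * l) div int p"
    unfolding nu_def
    by (metis floor_divide_of_int_eq of_int_add of_int_mult of_int_of_nat_eq)
  also have "l mod int p + int j * l = (int j + 1) * l + int p * (- (l div int p))"
    by (simp add: algebra_simps minus_div_mult_eq_mod[symmetric])
  also have "((int j + 1) * l + int p * (- (l div int p))) div int p = - (l div int p) + (int j + 1) * l div int p"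
    by (rule div_mult_self2) (use assms in simp)
  finally have A: "nu p l j = (int j + 1) * l div int p - l div int p" by simp
  have B: "int p * ((int j + 1) * l div int p) = (int j + 1) * l - ((int j + 1) * l) mod int p"
    by (metis add_diff_cancel_right' mult_div_mod_eq)
  show ?thesis unfolding A right_diff_distrib B ..
qed

lemma frac_int:
  assumes "q > 0"
  shows "frac (real_of_int z / real_of_int q) = real_of_int (z mod q) / real_of_int q"
proof -
  have "real_of_int z / real_of_int q - real_of_int (z mod q) / real_of_int q = real_of_int (z div q)"
  proof -
    have "real_of_int z = real_of_int q * real_of_int (z div q) + real_of_int (z mod q)"
      by (metis mult_div_mod_eq of_int_add of_int_mult)
    then show ?thesis using assms by (simp add: field_simps)
  qed
  moreover have "0 \<le> real_of_int (z mod q) / real_of_int q" using assms by simp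
  moreover have "real_of_int (z mod q) / real_of_int q < 1" using assms by simp
  ultimately show ?thesis unfolding frac_unique_iff by (metis Ints_of_int)
qed

lemma frac_R:
  assumes "p > 0"
  shows "frac (real x * real_of_int (l mod int p) / real p) = real_of_int ((int x * l) mod int p) / real p"
proof -
  have e: "real x * real_of_int (l mod int p) / real p = real_of_int (int x * (l mod int p)) / real_of_int (int p)" by simp
  have m: "(int x * (l mod int p)) mod int p = (int x * l) mod int p" by (simp add: mod_mult_right_eq)
  have q: "0 < int p" using assms by simp
  show ?thesis unfolding e frac_int[OF q] m by simp
qed

lemma frac_less_iff:
  assumes "p > 0"
  shows "frac (real x * real_of_int (l mod int p) / real p) < frac (real y * real_of_int (l mod int p) / real p)
     \<longleftrightarrow> (int x * l) mod int p < (int y * l) mod int p"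
  unfolding frac_R[OF assms] using assms by (simp add: divide_less_cancel)

lemma Dform:
  assumes "p > 0" "i \<le> p"
  shows "int p * (nu p l (i + j) - nu p l j) = int i * l + (int (p - i) * l) mod int p
     - (if (int (j+1) * l) mod int p < (int (p - i) * l) mod int p then int p else 0)"
proof -
  define h where "h = p - i"
  have ih: "int i = int p - int h" using assms unfolding h_def by simp
  have e1: "(int (i + j) + 1) * l = ((int j + 1) * l - int h * l) + l * int p"
    unfolding of_nat_add ih by (simp add: algebra_simps)
  have "((int (i + j) + 1) * l) mod int p = ((int j + 1) * l - int h * l) mod int p"
    unfolding e1 by simp
  also have "\<dots> = ((int (j+1) * l) mod int p - (int h * l) mod int p) mod int p"
  proof -
    have "int (j+1) = int j + 1" by simp
    then show ?thesis by (simp only: mod_diff_eq)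
  qed
  also have "\<dots> = (int (j+1) * l) mod int p - (int h * l) mod int p
      + (if (int (j+1) * l) mod int p < (int h * l) mod int p then int p else 0)"
  proof -
    have b: "0 \<le> (int (j+1) * l) mod int p" "(int (j+1) * l) mod int p < int p"
         "0 \<le> (int h * l) mod int p" "(int h * l) mod int p < int p"
      using assms by simp_all
    let ?x = "(int (j+1) * l) mod int p - (int h * l) mod int p"
    show ?thesis
    proof (cases "(int (j+1) * l) mod int p < (int h * l) mod int p")
      case True
      have "?x mod int p = (?x + int p) mod int p" by simp
      also have "\<dots> = ?x + int p"
        by (rule mod_pos_pos_trivial) (use True b in linarith)+
      finally show ?thesis using True by simp
    next
      case False
      have "?x mod int p = ?x"
        by (rule mod_pos_pos_trivial) (use False b in linarith)+
      then show ?thesis using False by simp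
    qed
  qed
  finally have R: "((int (i + j) + 1) * l) mod int p = (int (j+1) * l) mod int p - (int h * l) mod int p
      + (if (int (j+1) * l) mod int p < (int h * l) mod int p then int p else 0)" .
  have "int p * (nu p l (i + j) - nu p l j) = int p * nu p l (i + j) - int p * nu p l j"
    by (simp add: algebra_simps)
  also have "\<dots> = int i * l - ((int (i + j) + 1) * l) mod int p + ((int j + 1) * l) mod int p"
    unfolding nu_mul[OF assms(1)] by (simp add: algebra_simps)
  finally show ?thesis unfolding R h_def by (simp add: ac_simps)
qed

lemma R_inj:
  assumes pr: "prime p" and ndvd: "\<not> int p dvd l" and "a < b" "b < p"
  shows "(int a * l) mod int p \<noteq> (int b * l) mod int p"
proof
  assume "(int a * l) mod int p = (int b * l) mod int p"
  then have "int p dvd (int b * l - int a * l)" by (metis mod_eq_dvd_iff)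
  then have "int p dvd (int b - int a) * l" by (simp add: algebra_simps)
  moreover have "prime (int p)" using pr by simp
  ultimately have "int p dvd (int b - int a) \<or> int p dvd l" using prime_dvd_mult_iff by blast
  moreover have "\<not> int p dvd (int b - int a)"
  proof
    assume "int p dvd (int b - int a)"
    moreover have "0 < int b - int a" using assms by simp
    ultimately have "int p \<le> int b - int a" by (rule zdvd_imp_le)
    then show False using assms by simp
  qed
  ultimately show False using ndvd by blast
qed

lemma core:
  assumes pr: "prime p" and ndvd: "\<not> int p dvd l" and ki: "k + i \<le> p - 1"
  shows "nu p l (k+i) - nu p l k - nmin p l i \<ge> 0 \<and>
    (nu p l (k+i) - nu p l k - nmin p l i = 0 \<longleftrightarrow>
      (p - i = p \<or> p - i \<in> Eset p (l mod int p) \<or>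
       (int (k+1) * l) mod int p < (int (p - i) * l) mod int p))"
proof -
  define h where "h = p - i"
  define R where "R = (\<lambda>x::nat. (int x * l) mod int p)"
  define S where "S = {0..p-1-i}"
  define D where "D = (\<lambda>j. nu p l (i + j) - nu p l j)"
  define c where "c = int i * l + R h"
  have p0: "p > 0" using pr prime_gt_0_nat by blast
  have ip: "i \<le> p" using ki by simp
  have fin: "finite S" unfolding S_def by simp
  have kS: "k \<in> S" unfolding S_def using ki by simp
  have nm: "nmin p l i = Min (D ` S)" unfolding nmin_def D_def S_def ..
  have pD: "int p * D j = c - (if R (j+1) < R h then int p else 0)" for j
    unfolding D_def c_def R_def h_def using Dform[OF p0 ip] by simp
  have ek: "nu p l (k+i) - nu p l k - nmin p l i = D k - Min (D ` S)"
    unfolding nm D_def by (simp add: add.commute)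
  have Mle: "Min (D ` S) \<le> D k" using fin kS by simp
  have "Min (D ` S) \<in> D ` S" using fin kS by (intro Min_in) auto
  then obtain j0 where j0: "j0 \<in> S" "Min (D ` S) = D j0" by auto
  have cmp: "D a \<le> D b \<longleftrightarrow> int p * D a \<le> int p * D b" for a b
    using p0 by simp
  have cmpl: "D a < D b \<longleftrightarrow> int p * D a < int p * D b" for a b
    using p0 by simp
  have noless: "\<forall>j\<in>S. \<not> R (j+1) < R h" if "h = p \<or> h \<in> Eset p (l mod int p)"
  proof
    fix j assume jS: "j \<in> S"
    show "\<not> R (j+1) < R h"
    proof (cases "h = p")
      case True
      then have "R h = 0" unfolding R_def by simp
      moreover have "R (j+1) \<ge> 0" unfolding R_def using p0 by simp
      ultimately show ?thesis by simp
    next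
      case False
      then have hE: "h \<in> Eset p (l mod int p)" using that by simp
      have jle: "j \<le> p - 1 - i" using jS unfolding S_def by simp
      have "j + 1 \<le> h" unfolding h_def using jle ki p0 by arith
      show ?thesis
      proof (cases "j + 1 = h")
        case True then show ?thesis by simp
      next
        case False
        with \<open>j + 1 \<le> h\<close> have "j + 1 < h" by simp
        with hE have "frac (real (j+1) * real_of_int (l mod int p) / real p) > frac (real h * real_of_int (l mod int p) / real p)"
          unfolding Eset_def by auto
        then have "R h < R (j+1)" unfolding R_def using frac_less_iff[OF p0] by blast
        then show ?thesis by simp
      qed
    qed
  qed
  have A: "D k \<le> D j0" if "h = p \<or> h \<in> Eset p (l mod int p) \<or> R (k+1) < R h"
  proof (cases "R (k+1) < R h")
    case True
    then show ?thesis unfolding cmp pD by simp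
  next
    case False
    then have "h = p \<or> h \<in> Eset p (l mod int p)" using that by simp
    then have "\<not> R (j0+1) < R h" using noless j0 by blast
    then show ?thesis unfolding cmp pD using False by simp
  qed
  have B: "D k > Min (D ` S)" if nt: "\<not> (h = p \<or> h \<in> Eset p (l mod int p) \<or> R (k+1) < R h)"
  proof -
    have hp: "h < p" "1 \<le> h" using nt ki unfolding h_def by auto
    then obtain h' where h': "1 \<le> h'" "h' < h"
      "\<not> frac (real h' * real_of_int (l mod int p) / real p) > frac (real h * real_of_int (l mod int p) / real p)"
      using nt unfolding Eset_def by auto
    then have "\<not> R h < R h'" unfolding R_def using frac_less_iff[OF p0] by blast
    moreover have "R h' \<noteq> R h" unfolding R_def using R_inj[OF pr ndvd h'(2) hp(1)] .
    ultimately have lt: "R h' < R h" by simp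
    define j where "j = h' - 1"
    have jj: "j + 1 = h'" using h' unfolding j_def by simp
    have jS: "j \<in> S" unfolding S_def j_def using h' hp unfolding h_def by auto
    have "D j < D k" unfolding cmpl pD jj using lt nt p0 by simp
    moreover have "Min (D ` S) \<le> D j" using fin jS by simp
    ultimately show ?thesis by simp
  qed
  have G: "0 \<le> D k - Min (D ` S) \<and> (D k - Min (D ` S) = 0 \<longleftrightarrow>
      (h = p \<or> h \<in> Eset p (l mod int p) \<or> R (k+1) < R h))"
  proof (cases "h = p \<or> h \<in> Eset p (l mod int p) \<or> R (k+1) < R h")
    case True
    then have "D k \<le> D j0" by (rule A)
    then show ?thesis using True Mle j0 by simp
  next
    case False
    then have "Min (D ` S) < D k" by (rule B)
    then show ?thesis using False by simp
  qed
  show ?thesis unfolding ek using G unfolding h_def R_def by blast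
qed

lemma vmul: assumes "discrete_valuation v" "x \<noteq> 0" "y \<noteq> 0"
  shows "v (x * y) = v x + v y"
  using assms unfolding discrete_valuation_def by blast

lemma v1: assumes "discrete_valuation v" shows "v 1 = 0"
proof -
  have "v (1 * 1) = v 1 + v 1" by (rule vmul[OF assms]) simp_all
  then show ?thesis by simp
qed

lemma vneg: assumes "discrete_valuation v" "x \<noteq> 0" shows "v (- x) = v x"
proof -
  have "v ((-1) * (-1)) = v (-1) + v (-1)" by (rule vmul[OF assms(1)]) simp_all
  then have m1: "v (-1) = 0" using v1[OF assms(1)] by simp
  have "v ((-1) * x) = v (-1) + v x" by (rule vmul[OF assms(1)]) (simp_all add: assms)
  then show ?thesis using m1 by simp
qed

lemma m_add: assumes "discrete_valuation v" "x \<in> maxideal v" "y \<in> maxideal v"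
  shows "x + y \<in> maxideal v"
proof (cases "x = 0 \<or> y = 0 \<or> x + y = 0")
  case True then show ?thesis using assms by (auto simp: maxideal_def)
next
  case False
  then have "v (x + y) \<ge> min (v x) (v y)" using assms(1) unfolding discrete_valuation_def by blast
  then show ?thesis using assms False by (auto simp: maxideal_def)
qed

lemma m_neg: assumes "discrete_valuation v" "x \<in> maxideal v" shows "- x \<in> maxideal v"
proof (cases "x = 0")
  case True then show ?thesis by (simp add: maxideal_def)
next
  case False
  then show ?thesis using assms vneg[OF assms(1) False] by (simp add: maxideal_def)
qed

lemma resid_m: assumes "discrete_valuation v" "x \<in> maxideal v"
  shows "resid v x = resid v 0"
proof -
  have "x - y \<in> maxideal v \<longleftrightarrow> 0 - y \<in> maxideal v" for y
  proof
    assume "x - y \<in> maxideal v"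
    then have "(x - y) + (- x) \<in> maxideal v" using m_add m_neg assms by blast
    then show "0 - y \<in> maxideal v" by simp
  next
    assume "0 - y \<in> maxideal v"
    then have "x + (0 - y) \<in> maxideal v" using m_add assms by blast
    then show "x - y \<in> maxideal v" by simp
  qed
  then show ?thesis unfolding resid_def by auto
qed

lemma vpow: assumes "discrete_valuation v" "\<pi> \<noteq> 0" "v \<pi> = 1"
  shows "v (\<pi> ^ n) = int n"
proof (induction n)
  case 0 then show ?case using v1[OF assms(1)] by simp
next
  case (Suc n)
  have "v (\<pi> * \<pi> ^ n) = v \<pi> + v (\<pi> ^ n)" by (rule vmul[OF assms(1)]) (simp_all add: assms)
  then show ?case using Suc assms by simp
qed

theorem proposition7p4:
  fixes v :: "'a::field \<Rightarrow> int" and \<pi> :: 'a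
    and p :: nat and l :: int and k i :: nat
  assumes val: "discrete_valuation v"
    and unif: "\<pi> \<noteq> 0" "v \<pi> = 1"
    and resp: "of_nat p \<noteq> (0::'a)" "v (of_nat p) > 0"
    and pr: "prime p" and odd: "odd p"
    and ndvd: "\<not> int p dvd l"
    and ki: "k \<le> p - 1" "i \<le> p - 1" "k + i \<le> p - 1"
  shows "let a = l mod int p; h = p - i in
    (\<forall>j \<le> p - 1. mu \<pi> p l k j i \<in> valring v) \<and>
    (\<forall>j \<le> p - 1. j \<noteq> k + i \<longrightarrow> resid v (mu \<pi> p l k j i) = resid v 0) \<and>
    (h \<notin> Eset p a \<longrightarrow>
       (if h = p \<or> frac (real (k + 1) * real_of_int a / real p) < frac (real h * real_of_int a / real p)
        then resid v (mu \<pi> p l k (k + i) i) = resid v 1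
        else resid v (mu \<pi> p l k (k + i) i) = resid v 0)) \<and>
    (h \<in> Eset p a \<longrightarrow> resid v (mu \<pi> p l k (k + i) i) = resid v 1)"
proof -
  define e where "e = nu p l (k+i) - nu p l k - nmin p l i"
  have p0: "p > 0" using pr prime_gt_0_nat by blast
  have C: "e \<ge> 0 \<and> (e = 0 \<longleftrightarrow> (p - i = p \<or> p - i \<in> Eset p (l mod int p) \<or>
       (int (k+1) * l) mod int p < (int (p - i) * l) mod int p))"
    unfolding e_def by (rule core[OF pr ndvd ki(3)])
  have fr: "frac (real (k + 1) * real_of_int (l mod int p) / real p) < frac (real (p - i) * real_of_int (l mod int p) / real p)
     \<longleftrightarrow> (int (k+1) * l) mod int p < (int (p - i) * l) mod int p"
    by (rule frac_less_iff[OF p0])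
  have muk: "mu \<pi> p l k (k + i) i = \<pi> ^ nat e"
    unfolding mu_def e_def[symmetric] using C by (simp add: power_int_def)
  have mu0: "j \<noteq> k + i \<Longrightarrow> mu \<pi> p l k j i = 0" for j unfolding mu_def by simp
  have vp: "v (\<pi> ^ nat e) = nat e" by (rule vpow[OF val unif])
  have inO: "mu \<pi> p l k (k + i) i \<in> valring v" unfolding muk valring_def using vp by simp
  have one: "resid v (mu \<pi> p l k (k + i) i) = resid v 1" if "e = 0"
    unfolding muk using that by simp
  have zero: "resid v (mu \<pi> p l k (k + i) i) = resid v 0" if "e \<noteq> 0"
  proof -
    have "mu \<pi> p l k (k + i) i \<in> maxideal v" unfolding muk maxideal_def using vp that C by simp
    then show ?thesis by (rule resid_m[OF val])
  qed
  have P1: "\<forall>j \<le> p - 1. mu \<pi> p l k j i \<in> valring v"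
  proof (intro allI impI)
    fix j assume "j \<le> p - 1"
    show "mu \<pi> p l k j i \<in> valring v"
    proof (cases "j = k + i")
      case True then show ?thesis using inO by simp
    next
      case False then show ?thesis using mu0 by (simp add: valring_def)
    qed
  qed
  have P2: "\<forall>j \<le> p - 1. j \<noteq> k + i \<longrightarrow> resid v (mu \<pi> p l k j i) = resid v 0"
    using mu0 by simp
  have P3: "p - i \<notin> Eset p (l mod int p) \<longrightarrow>
       (if p - i = p \<or> frac (real (k + 1) * real_of_int (l mod int p) / real p) < frac (real (p - i) * real_of_int (l mod int p) / real p)
        then resid v (mu \<pi> p l k (k + i) i) = resid v 1
        else resid v (mu \<pi> p l k (k + i) i) = resid v 0)"
  proof
    assume nE: "p - i \<notin> Eset p (l mod int p)"
    show "if p - i = p \<or> frac (real (k + 1) * real_of_int (l mod int p) / real p) < frac (real (p - i) * real_of_int (l mod int p) / real p)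
        then resid v (mu \<pi> p l k (k + i) i) = resid v 1
        else resid v (mu \<pi> p l k (k + i) i) = resid v 0"
    proof (cases "p - i = p \<or> frac (real (k + 1) * real_of_int (l mod int p) / real p) < frac (real (p - i) * real_of_int (l mod int p) / real p)")
      case True
      then have "e = 0" using C fr by blast
      then show ?thesis using True one by simp
    next
      case False
      then have "e \<noteq> 0" using C fr nE by blast
      then show ?thesis using False zero by simp
    qed
  qed
  have P4: "p - i \<in> Eset p (l mod int p) \<longrightarrow> resid v (mu \<pi> p l k (k + i) i) = resid v 1"
    using C one by blast
  show ?thesis unfolding Let_def using P1 P2 P3 P4 by blast
qed


end
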